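(* Let $k\geq 1$ and let $G$ be a $k$-degenerate graph on $n\geq 1$ vertices. Then $pdim(G) \leq \lceil 8.317\, k \log_2 n\rceil + 1$.
   Context: A graph $G$ is $k$-degenerate if its vertices admit an ordering $v_1,\dots,v_n$ such that each $v_i$ has at most $k$ neighbours among $\{v_j : j<i\}$. For a graph $G=(V,E)$ and $l\in\mathbb{N}$, an $l$-encoding of $G$ is an injective function $\phi: V\to\mathbb{N}^l$ such that for all $u,v\in V$, $\{u,v\}\in E$ if and only if $\phi(u)$ and $\phi(v)$ differ in all $l$ coordinates. The product dimension $pdim(G)$ is the minimum $l$ such that an $l$-encoding of $G$ exists. *)

theory Defs
  imports "HOL-Analysis.Analysis"
begin

definition simple_graph :: "'a set \<Rightarrow> ('a \<Rightarrow> 'a \<Rightarrow> bool) \<Rightarrow> bool" where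
  "simple_graph V E \<longleftrightarrow> finite V \<and> (\<forall>u v. E u v \<longrightarrow> u \<in> V \<and> v \<in> V)
     \<and> (\<forall>u v. E u v \<longrightarrow> E v u) \<and> (\<forall>v. \<not> E v v)"

definition degenerate :: "nat \<Rightarrow> 'a set \<Rightarrow> ('a \<Rightarrow> 'a \<Rightarrow> bool) \<Rightarrow> bool" where
  "degenerate k V E \<longleftrightarrow> (\<exists>vs. distinct vs \<and> set vs = V \<and>
     (\<forall>i < length vs. card {j. j < i \<and> E (vs ! i) (vs ! j)} \<le> k))"

definition encoding :: "nat \<Rightarrow> 'a set \<Rightarrow> ('a \<Rightarrow> 'a \<Rightarrow> bool) \<Rightarrow> ('a \<Rightarrow> nat list) \<Rightarrow> bool" where
  "encoding l V E \<phi> \<longleftrightarrow> (\<forall>v\<in>V. length (\<phi> v) = l) \<and> inj_on \<phi> V \<and>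
     (\<forall>u\<in>V. \<forall>v\<in>V. E u v \<longleftrightarrow> (\<forall>i<l. \<phi> u ! i \<noteq> \<phi> v ! i))"

definition pdim :: "'a set \<Rightarrow> ('a \<Rightarrow> 'a \<Rightarrow> bool) \<Rightarrow> nat" where
  "pdim V E = (LEAST l. \<exists>\<phi>. encoding l V E \<phi>)"

end

theory Submission
  imports Defs "HOL-Probability.Probability"
begin


lemma measure_bind_pmf_real:
  "measure (measure_pmf (bind_pmf M f)) X = (\<integral>x. measure (measure_pmf (f x)) X \<partial>measure_pmf M)"
  unfolding measure_pmf_bind
  by (rule measure_pmf.measure_bind[where N="count_space UNIV"])
     (auto intro: measurable_measure_pmf simp: space_subprob_algebra subprob_space_measure_pmf)

lemma integrable_bounded_pmf:
  fixes f :: "'a \<Rightarrow> real"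
  assumes "\<And>x. \<bar>f x\<bar> \<le> B"
  shows "integrable (measure_pmf M) f"
  using assms by (intro measure_pmf.integrable_const_bound[where B=B]) auto

fun colr :: "nat \<Rightarrow> ('a \<Rightarrow> 'a \<Rightarrow> bool) \<Rightarrow> 'a list \<Rightarrow> ('a \<Rightarrow> nat) pmf" where
  "colr q E [] = return_pmf (\<lambda>_. 0)"
| "colr q E (w # ws) = bind_pmf (colr q E ws)
     (\<lambda>c. map_pmf (\<lambda>x. c(w := x)) (pmf_of_set ({0..<q} - c ` {u \<in> set ws. E w u})))"

fun dg :: "nat \<Rightarrow> ('a \<Rightarrow> 'a \<Rightarrow> bool) \<Rightarrow> 'a list \<Rightarrow> bool" where
  "dg k E [] = True"
| "dg k E (w # ws) = (card {u \<in> set ws. E w u} \<le> k \<and> dg k E ws)"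

lemma allowed_card:
  fixes c :: "'a \<Rightarrow> nat"
  assumes "finite B" "card B \<le> k" "k < q"
  shows "card ({0..<q} - c ` B) \<ge> q - k" "{0..<q} - c ` B \<noteq> {}" "finite ({0..<q} - c ` B)"
    "card ({0..<q} - c ` B) \<le> q"
proof -
  have "card (c ` B) \<le> k" using card_image_le[OF assms(1), of c] assms(2) by linarith
  moreover have "card {0..<q} - card (c ` B) \<le> card ({0..<q} - c ` B)"
    using assms(1) by (intro diff_card_le_card_Diff) auto
  ultimately show 1: "card ({0..<q} - c ` B) \<ge> q - k" by simp
  then show "{0..<q} - c ` B \<noteq> {}" using assms(3) by (metis card.empty diff_is_0_eq leD le_zero_eq)
  show "finite ({0..<q} - c ` B)" by simp
  show "card ({0..<q} - c ` B) \<le> q" by (metis card_atLeastLessThan card_mono diff_zero Diff_subset finite_atLeastLessThan)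
qed

locale gsetup =
  fixes E :: "'a \<Rightarrow> 'a \<Rightarrow> bool" and k q :: nat
  assumes sym: "\<And>u v. E u v \<Longrightarrow> E v u" and irr: "\<And>v. \<not> E v v" and kq: "k < q"
begin

lemma set_colr_step:
  assumes "dg k E (w # ws)" "c \<in> set_pmf (colr q E (w # ws))"
  obtains c0 x where "c0 \<in> set_pmf (colr q E ws)" "x \<in> {0..<q} - c0 ` {u \<in> set ws. E w u}"
    "c = c0(w := x)"
proof -
  let ?B = "{u \<in> set ws. E w u}"
  from assms(2) obtain c0 where c0: "c0 \<in> set_pmf (colr q E ws)"
    and "c \<in> set_pmf (map_pmf (\<lambda>x. c0(w := x)) (pmf_of_set ({0..<q} - c0 ` ?B)))" by auto
  moreover have "finite ?B" by simp
  moreover have "card ?B \<le> k" using assms(1) by simp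
  ultimately have "c \<in> (\<lambda>x. c0(w := x)) ` ({0..<q} - c0 ` ?B)"
    using allowed_card[of ?B k q c0] kq by auto
  then obtain x where "x \<in> {0..<q} - c0 ` ?B" "c = c0(w := x)" by blast
  then show ?thesis using that c0 by blast
qed

lemma colr_proper:
  assumes "dg k E ws" "distinct ws" "c \<in> set_pmf (colr q E ws)"
  shows "(\<forall>u\<in>set ws. \<forall>v\<in>set ws. E u v \<longrightarrow> c u \<noteq> c v) \<and> (\<forall>u\<in>set ws. c u < q)"
  using assms
proof (induction ws arbitrary: c)
  case Nil then show ?case by simp
next
  case (Cons w ws)
  from set_colr_step[OF Cons.prems(1,3)] obtain c0 x where
    c0: "c0 \<in> set_pmf (colr q E ws)" and x: "x \<in> {0..<q} - c0 ` {u \<in> set ws. E w u}"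
    and c: "c = c0(w := x)" by blast
  have IH: "(\<forall>u\<in>set ws. \<forall>v\<in>set ws. E u v \<longrightarrow> c0 u \<noteq> c0 v) \<and> (\<forall>u\<in>set ws. c0 u < q)"
    using Cons c0 by auto
  have wn: "w \<notin> set ws" using Cons.prems(2) by simp
  show ?case
  proof (intro conjI ballI impI)
    fix u v assume u: "u \<in> set (w # ws)" and v: "v \<in> set (w # ws)" and e: "E u v"
    show "c u \<noteq> c v"
    proof (cases "u = w")
      case True
      then have "v \<noteq> w" using e irr by auto
      then show ?thesis using True x v e c by auto
    next
      case False
      note uw = False
      show ?thesis
      proof (cases "v = w")
        case True
        then show ?thesis using uw x u sym[OF e] c by auto
      next
        case False
        then show ?thesis using uw u v IH e c by auto
      qed
    qed
  next
    fix u assume "u \<in> set (w # ws)"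
    then show "c u < q" using IH x c by auto
  qed
qed

lemma colr_old:
  assumes "u \<noteq> w" "v \<noteq> w"
  shows "measure (measure_pmf (colr q E (w # ws))) {c. c u = c v}
       = measure (measure_pmf (colr q E ws)) {c. c u = c v}"
proof -
  have eq: "map_pmf (\<lambda>c. (c u, c v)) (colr q E (w # ws)) = map_pmf (\<lambda>c. (c u, c v)) (colr q E ws)"
    using assms by (simp add: map_bind_pmf map_pmf_comp map_pmf_def[of _ "colr q E ws"])
  have "measure (measure_pmf (colr q E (w # ws))) {c. c u = c v}
      = measure (measure_pmf (map_pmf (\<lambda>c. (c u, c v)) (colr q E (w # ws)))) {p. fst p = snd p}"
    by (simp add: vimage_def)
  also have "\<dots> = measure (measure_pmf (map_pmf (\<lambda>c. (c u, c v)) (colr q E ws))) {p. fst p = snd p}"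
    by (simp only: eq)
  also have "\<dots> = measure (measure_pmf (colr q E ws)) {c. c u = c v}"
    by (simp add: vimage_def)
  finally show ?thesis .
qed

lemma colr_prob:
  assumes "dg k E ws" "distinct ws" "u \<in> set ws" "v \<in> set ws" "u \<noteq> v" "\<not> E u v"
  shows "measure (measure_pmf (colr q E ws)) {c. c u = c v} \<le> 1 / (real q - real k) \<and>
         (1 - real k / (real q - real k)) / real q \<le> measure (measure_pmf (colr q E ws)) {c. c u = c v}"
  using assms
proof (induction ws arbitrary: u v)
  case Nil then show ?case by simp
next
  case (Cons w ws)
  let ?B = "{u \<in> set ws. E w u}"
  let ?D = "colr q E ws"
  define A where "A c = {0..<q} - c ` ?B" for c :: "'a \<Rightarrow> nat"
  have dgw: "dg k E ws" and cB: "card ?B \<le> k" using Cons.prems(1) by auto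
  have wn: "w \<notin> set ws" and dws: "distinct ws" using Cons.prems(2) by auto
  have finB: "finite ?B" by simp
  have Aprops: "card (A c) \<ge> q - k" "A c \<noteq> {}" "finite (A c)" "card (A c) \<le> q" for c
    unfolding A_def using allowed_card[OF finB cB kq] by auto
  have qk: "real q - real k > 0" using kq by simp
  have key: "measure (measure_pmf (colr q E (w # ws))) {c. c w = c u} \<le> 1 / (real q - real k) \<and>
         (1 - real k / (real q - real k)) / real q \<le> measure (measure_pmf (colr q E (w # ws))) {c. c w = c u}"
    if u: "u \<in> set ws" and nE: "\<not> E w u" for u
  proof -
    have uw: "u \<noteq> w" using u wn by auto
    define h where "h c = (if c u \<in> A c then 1 / real (card (A c)) else 0)" for c
    have "measure (measure_pmf (colr q E (w # ws))) {c. c w = c u}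
        = (\<integral>c. measure (measure_pmf (map_pmf (\<lambda>x. c(w := x)) (pmf_of_set (A c)))) {c. c w = c u} \<partial>measure_pmf ?D)"
      by (simp add: measure_bind_pmf_real A_def)
    also have "\<dots> = (\<integral>c. h c \<partial>measure_pmf ?D)"
    proof (rule Bochner_Integration.integral_cong[OF refl])
      fix c :: "'a \<Rightarrow> nat"
      have "measure (measure_pmf (map_pmf (\<lambda>x. c(w := x)) (pmf_of_set (A c)))) {c. c w = c u}
          = measure (measure_pmf (pmf_of_set (A c))) {x. x = c u}"
        using uw by (simp add: vimage_def)
      also have "\<dots> = real (card (A c \<inter> {x. x = c u})) / real (card (A c))"
        using Aprops[of c] by (simp add: measure_pmf_of_set)
      also have "\<dots> = h c"
      proof (cases "c u \<in> A c")
        case True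
        then have "A c \<inter> {x. x = c u} = {c u}" by auto
        then show ?thesis using True by (simp add: h_def)
      next
        case False
        then have "A c \<inter> {x. x = c u} = {}" by auto
        then show ?thesis using False by (simp add: h_def)
      qed
      finally show "measure (measure_pmf (map_pmf (\<lambda>x. c(w := x)) (pmf_of_set (A c)))) {c. c w = c u} = h c" .
    qed
    finally have meq: "measure (measure_pmf (colr q E (w # ws))) {c. c w = c u} = (\<integral>c. h c \<partial>measure_pmf ?D)" .
    have cardpos: "real (card (A c)) \<ge> real q - real k" for c
      using Aprops(1)[of c] kq by linarith
    have hbound: "\<bar>h c\<bar> \<le> 1" for c
    proof -
      have "real (card (A c)) \<ge> 1" using cardpos[of c] kq by linarith
      then show ?thesis by (simp add: h_def)
    qed
    have hint: "integrable (measure_pmf ?D) h" by (rule integrable_bounded_pmf[OF hbound])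
    have hup: "h c \<le> 1 / (real q - real k)" for c
      using cardpos[of c] qk by (auto simp: h_def intro!: divide_left_mono)
    have upper: "(\<integral>c. h c \<partial>measure_pmf ?D) \<le> 1 / (real q - real k)"
      by (rule measure_pmf.integral_le_const[OF hint]) (simp add: hup)
    define S where "S = {c :: 'a \<Rightarrow> nat. c u \<notin> c ` ?B}"
    have hlow: "(1 / real q) * indicator S c \<le> h c" if "c \<in> set_pmf ?D" for c
    proof -
      have "c u < q" using colr_proper[OF dgw dws that] u by auto
      show ?thesis
      proof (cases "c \<in> S")
        case True
        then have "c u \<in> A c" using \<open>c u < q\<close> by (simp add: A_def S_def)
        moreover have "real (card (A c)) \<le> real q" using Aprops(4)[of c] by simp
        moreover have "real (card (A c)) > 0" using cardpos[of c] qk by linarith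
        ultimately show ?thesis using True by (simp add: h_def frac_le)
      next
        case False
        then show ?thesis by (simp add: h_def)
      qed
    qed
    have int2: "integrable (measure_pmf ?D) (\<lambda>c. (1 / real q) * indicator S c)"
      using kq by (intro integrable_bounded_pmf[where B=1]) (auto simp: indicator_def)
    have "(\<integral>c. (1 / real q) * indicator S c \<partial>measure_pmf ?D) \<le> (\<integral>c. h c \<partial>measure_pmf ?D)"
      by (rule integral_mono_AE[OF int2 hint]) (unfold AE_measure_pmf_iff, use hlow in blast)
    moreover have "(\<integral>c. (1 / real q) * indicator S c \<partial>measure_pmf ?D) = (1 / real q) * measure (measure_pmf ?D) S"
      by simp
    moreover have "measure (measure_pmf ?D) S = 1 - measure (measure_pmf ?D) (\<Union>b\<in>?B. {c. c u = c b})"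
    proof -
      have "S = space (measure_pmf ?D) - (\<Union>b\<in>?B. {c. c u = c b})" by (auto simp: S_def)
      then show ?thesis using measure_pmf.prob_compl[of "(\<Union>b\<in>?B. {c. c u = c b})" ?D] by simp
    qed
    moreover have "measure (measure_pmf ?D) (\<Union>b\<in>?B. {c. c u = c b}) \<le> real k / (real q - real k)"
    proof -
      have "measure (measure_pmf ?D) (\<Union>b\<in>?B. {c. c u = c b}) \<le> (\<Sum>b\<in>?B. measure (measure_pmf ?D) {c. c u = c b})"
        by (rule measure_pmf.finite_measure_subadditive_finite) auto
      also have "\<dots> \<le> real (card ?B) * (1 / (real q - real k))"
      proof (rule sum_bounded_above)
        fix b assume b: "b \<in> ?B"
        then have bu: "b \<noteq> u" using nE by auto
        show "measure (measure_pmf ?D) {c. c u = c b} \<le> 1 / (real q - real k)"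
        proof (cases "E u b")
          case True
          have "set_pmf ?D \<inter> {c. c u = c b} = {}"
            using colr_proper[OF dgw dws] u b True by blast
          then have "measure (measure_pmf ?D) {c. c u = c b} = 0" by (simp add: measure_pmf_zero_iff)
          then show ?thesis using qk by simp
        next
          case False
          then show ?thesis using Cons.IH[OF dgw dws u _ bu[symmetric] False] b by auto
        qed
      qed
      also have "\<dots> \<le> real k / (real q - real k)"
        using cB qk by (simp add: divide_right_mono)
      finally show ?thesis .
    qed
    ultimately have "(1 / real q) * (1 - real k / (real q - real k)) \<le> (\<integral>c. h c \<partial>measure_pmf ?D)"
      using kq by (smt (verit, ccfv_SIG) divide_nonneg_nonneg mult_left_mono of_nat_0_le_iff)
    then have "(1 - real k / (real q - real k)) / real q \<le> (\<integral>c. h c \<partial>measure_pmf ?D)"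
      by simp
    then show ?thesis using upper meq by simp
  qed
  show ?case
  proof (cases "u = w")
    case True
    then have "v \<in> set ws" "\<not> E w v" using Cons.prems by auto
    then show ?thesis using key[of v] True by simp
  next
    case False
    note uw = False
    show ?thesis
    proof (cases "v = w")
      case True
      then have h1: "u \<in> set ws" "\<not> E w u" using Cons.prems uw sym by auto
      have seq: "{c. c u = c v} = {c. c w = c u}" using True by auto
      show ?thesis unfolding seq by (rule key[OF h1])
    next
      case False
      then have "u \<in> set ws" "v \<in> set ws" using Cons.prems uw by auto
      then show ?thesis using Cons.IH[OF dgw dws] Cons.prems colr_old[OF uw False] by simp
    qed
  qed
qed

end



definition qk :: "nat \<Rightarrow> nat" where "qk k = (if k = 1 then 3 else (7*k+1) div 2)"
definition pk :: "nat \<Rightarrow> real" where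
  "pk k = (1 - real k / (real (qk k) - real k)) / real (qk k)"

lemma qk_gt: "k \<ge> 1 \<Longrightarrow> k < qk k" unfolding qk_def by auto

lemma exp_141: "exp (-1.41::real) < 1/4"
proof -
  have "1 + 0.3525 + (0.3525::real)\<^sup>2 / 2 \<le> exp 0.3525" by (rule exp_lower_Taylor_quadratic) simp
  then have a: "1.41462 \<le> exp (0.3525::real)" by (simp add: power2_eq_square)
  have "(1.41462::real)^4 \<le> exp 0.3525 ^ 4" by (rule power_mono[OF a]) simp
  also have "exp (0.3525::real) ^ 4 = exp (real 4 * 0.3525)" by (rule exp_of_nat_mult[symmetric])
  finally have "(1.41462::real)^4 \<le> exp 1.41" by simp
  moreover have "(4::real) < 1.41462^4" by (simp add: numeral_eq_Suc)
  ultimately have "4 < exp (1.41::real)" by linarith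
  then show ?thesis by (simp add: exp_minus field_simps)
qed

lemma pk17_aux:
  fixes Q k :: real
  assumes k2: "k \<ge> 2" and c: "2*Q = 7*k \<or> (k \<ge> 3 \<and> 2*Q = 7*k+1)"
  shows "0.17 \<le> (Q - 2*k) * k / (Q * (Q - k))"
proof -
  have Qp: "Q * (Q - k) > 0" using c k2 by auto
  have "(Q - 2*k) * k - 0.17 * (Q * (Q - k)) \<ge> 0"
    using c
  proof
    assume "2*Q = 7*k"
    then have QQ: "Q = 3.5 * k" by simp
    have "(Q - 2*k) * k - 0.17 * (Q * (Q - k)) = 0.0125 * k^2"
      unfolding QQ by (simp add: algebra_simps power2_eq_square)
    moreover have "0 \<le> 0.0125 * k^2" by simp
    ultimately show ?thesis by linarith
  next
    assume a: "k \<ge> 3 \<and> 2*Q = 7*k+1"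
    then have QQ: "Q = 3.5 * k + 0.5" by simp
    have eq: "(Q - 2*k) * k - 0.17 * (Q * (Q - k)) = (0.05 * k^2 - 0.04 * k - 0.17) / 4"
      unfolding QQ by (simp add: algebra_simps power2_eq_square)
    have kk: "k * k \<ge> 3 * k" using a by (intro mult_right_mono) auto
    have X: "0.05 * k^2 - 0.04*k - 0.17 \<ge> 0" unfolding power2_eq_square using kk a by linarith
    show ?thesis unfolding eq using X by simp
  qed
  then have "0.17 * (Q * (Q - k)) \<le> (Q - 2*k) * k" by simp
  then show ?thesis using Qp by (simp add: le_divide_eq)
qed

lemma pk_key:
  assumes "k \<ge> 1"
  shows "0 < pk k" "pk k < 1" "(1 - pk k) powr (8.317 * real k) < 1/4"
proof -
  have qg: "k < qk k" using qk_gt assms by blast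
  define Q where "Q = real (qk k)"
  have Qk: "Q - real k > 0" "Q > 0" using qg unfolding Q_def by auto
  have pform: "pk k = (Q - 2*k) / (Q * (Q - k))"
    using Qk unfolding pk_def Q_def[symmetric] by (simp add: field_simps)
  have cases: "(k = 1 \<and> Q = 3) \<or> (k \<ge> 2 \<and> 2*Q = 7*k) \<or> (k \<ge> 3 \<and> 2*Q = 7*k+1)"
  proof (cases "k = 1")
    case True then show ?thesis by (simp add: Q_def qk_def)
  next
    case False
    then have k2: "k \<ge> 2" using assms by simp
    show ?thesis
    proof (cases "even k")
      case True
      then have "2 * qk k = 7*k" using False unfolding qk_def by auto
      then have "2*Q = 7*real k" unfolding Q_def by (metis of_nat_mult of_nat_numeral)
      then show ?thesis using k2 by auto
    next
      case odd: False
      then have "2 * qk k = 7*k+1" using False unfolding qk_def by presburger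
      then have "2*Q = 7*real k + 1" unfolding Q_def by (metis of_nat_Suc of_nat_mult of_nat_numeral add.commute Suc_eq_plus1)
      moreover have "k \<ge> 3" using k2 odd by presburger
      ultimately show ?thesis by auto
    qed
  qed
  have Q2k: "Q > 2 * k" using cases by auto
  have kpos: "real k \<ge> 1" using assms by simp
  show p0: "0 < pk k" unfolding pform using Q2k kpos by (intro divide_pos_pos mult_pos_pos) auto
  have "pk k \<le> 1 / Q"
  proof -
    have "(Q - 2*k) / (Q * (Q - k)) \<le> (Q - k) / (Q * (Q - k))"
      using Q2k kpos by (intro divide_right_mono) auto
    also have "\<dots> = 1 / Q" using Q2k kpos by (simp add: field_simps)
    finally show ?thesis unfolding pform .
  qed
  moreover have "1 / Q < 1" using Q2k kpos by simp
  ultimately show p1: "pk k < 1" by linarith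
  show "(1 - pk k) powr (8.317 * real k) < 1/4"
  proof (cases "k = 1")
    case True
    then have "Q = 3" using cases by auto
    then have "pk k = 1/6" unfolding pform using True by simp
    then have e: "1 - pk k = 5/6" by simp
    have "(1 - pk k) powr (8.317 * real k) = (5/6) powr (8.317 * real (1::nat))" unfolding e using True by simp
    also have "\<dots> = (5/6) powr (8.317::real)" by simp
    also have "\<dots> \<le> (5/6) powr (real 8)" by (rule powr_mono') auto
    also have "\<dots> = (5/6)^8" by (rule powr_realpow) simp
    also have "\<dots> < 1/4" by (simp add: numeral_eq_Suc)
    finally show ?thesis .
  next
    case False
    have pk17: "pk k * k \<ge> 0.17"
    proof -
      have "real k \<ge> 2" "2*Q = 7*real k \<or> (real k \<ge> 3 \<and> 2*Q = 7*real k+1)" using cases False by auto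
      then have "0.17 \<le> (Q - 2*real k) * real k / (Q * (Q - real k))" by (rule pk17_aux)
      then show ?thesis unfolding pform by simp
    qed
    have "(1 - pk k) powr (8.317 * real k) \<le> exp (- pk k) powr (8.317 * real k)"
    proof (rule powr_mono2)
      show "1 - pk k \<le> exp (- pk k)" using exp_ge_add_one_self[of "- pk k"] by simp
    qed (use p1 in auto)
    also have "\<dots> = exp (- (8.317 * (pk k * k)))" by (simp add: powr_def mult_ac)
    also have "\<dots> \<le> exp (-1.41)" using pk17 by simp
    also have "\<dots> < 1/4" by (rule exp_141)
    finally show ?thesis .
  qed
qed

lemma final_num:
  fixes n k l :: nat
  assumes "k \<ge> 1" "n \<ge> 2" "real l \<ge> 8.317 * real k * log 2 (real n)"
  shows "real n ^ 2 * (1 - pk k) ^ l < 1"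
proof -
  note pk = pk_key[OF assms(1)]
  let ?b = "1 - pk k"
  have b0: "0 < ?b" "?b \<le> 1" using pk by auto
  have L: "log 2 (real n) > 0" using assms(2) by simp
  have "?b ^ l = ?b powr real l" using b0 by (simp add: powr_realpow)
  also have "\<dots> \<le> ?b powr (8.317 * real k * log 2 (real n))"
    using b0 assms(3) by (intro powr_mono') auto
  also have "\<dots> = (?b powr (8.317 * real k)) powr (log 2 (real n))" by (simp add: powr_powr)
  also have "\<dots> < (1/4) powr (log 2 (real n))"
    using pk(3) L b0 by (intro powr_less_mono2) auto
  also have "(1/4::real) powr (log 2 (real n)) = 1 / (real n)^2"
  proof -
    have e: "(1/4::real) = 2 powr (-2)" by (simp add: powr_minus)
    have "(1/4::real) powr (log 2 (real n)) = 2 powr (-2 * log 2 (real n))"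
      by (simp only: e powr_powr)
    also have "\<dots> = (2 powr log 2 (real n)) powr (-2)"
      by (simp add: powr_powr mult.commute)
    also have "\<dots> = real n powr (-2)" using assms(2) by simp
    also have "\<dots> = 1 / real n powr 2" by (simp add: powr_minus_divide)
    also have "real n powr 2 = real n ^ 2" using assms(2) powr_realpow[of "real n" 2] by simp
    finally show ?thesis .
  qed
  finally have "?b ^ l < 1 / real n ^ 2" .
  moreover have np: "real n ^ 2 > 0" using assms(2) by simp
  ultimately have "real n ^ 2 * ?b ^ l < real n ^ 2 * (1 / real n ^ 2)" by (intro mult_strict_left_mono)
  then show ?thesis using np by simp
qed




lemma exists_good:
  fixes D :: "('a \<Rightarrow> nat) pmf" and U :: "('a \<times> 'a) set"
  assumes finU: "finite U" and pb: "\<forall>x\<in>U. measure (measure_pmf D) {c. c (fst x) = c (snd x)} \<ge> p"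
  shows "\<exists>c\<in>set_pmf D. real (card {x\<in>U. c (fst x) \<noteq> c (snd x)}) \<le> (1 - p) * real (card U)"
proof -
  define f where "f c = real (card {x\<in>U. c (fst x) \<noteq> c (snd x)})" for c :: "'a \<Rightarrow> nat"
  have fsum: "f c = (\<Sum>x\<in>U. indicator {c. c (fst x) \<noteq> c (snd x)} c)" for c
  proof -
    have "{x\<in>U. c (fst x) \<noteq> c (snd x)} = U \<inter> {x. c (fst x) \<noteq> c (snd x)}" by auto
    then show ?thesis
      unfolding f_def using finU by (simp add: indicator_def sum.inter_filter[symmetric])
  qed
  have fb: "\<bar>f c\<bar> \<le> real (card U)" for c
    unfolding f_def using finU by (simp add: card_mono)
  have fint: "integrable (measure_pmf D) f" by (rule integrable_bounded_pmf[OF fb])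
  have "(\<integral>c. f c \<partial>measure_pmf D) = (\<Sum>x\<in>U. (\<integral>c. indicator {c. c (fst x) \<noteq> c (snd x)} c \<partial>measure_pmf D))"
    unfolding fsum
    by (rule Bochner_Integration.integral_sum) (auto intro!: integrable_bounded_pmf[where B=1] simp: indicator_def)
  also have "\<dots> = (\<Sum>x\<in>U. measure (measure_pmf D) {c. c (fst x) \<noteq> c (snd x)})" by simp
  also have "\<dots> \<le> (\<Sum>x\<in>U. 1 - p)"
  proof (rule sum_mono)
    fix x assume x: "x \<in> U"
    have "{c. c (fst x) \<noteq> c (snd x)} = space (measure_pmf D) - {c. c (fst x) = c (snd x)}" by auto
    then have "measure (measure_pmf D) {c. c (fst x) \<noteq> c (snd x)} = 1 - measure (measure_pmf D) {c. c (fst x) = c (snd x)}"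
      using measure_pmf.prob_compl[of "{c. c (fst x) = c (snd x)}" D] by simp
    then show "measure (measure_pmf D) {c. c (fst x) \<noteq> c (snd x)} \<le> 1 - p" using pb x by simp
  qed
  also have "\<dots> = (1 - p) * real (card U)" by simp
  finally have intle: "(\<integral>c. f c \<partial>measure_pmf D) \<le> (1 - p) * real (card U)" .
  define S where "S = f ` set_pmf D"
  have "S \<subseteq> real ` {0..card U}" unfolding S_def f_def using finU by (auto intro!: imageI card_mono)
  then have finS: "finite S" by (rule finite_subset) simp
  have neS: "S \<noteq> {}" unfolding S_def using set_pmf_not_empty by auto
  obtain c0 where c0: "c0 \<in> set_pmf D" "f c0 = Min S"
    using Min_in[OF finS neS] unfolding S_def by auto
  have "Min S \<le> (\<integral>c. f c \<partial>measure_pmf D)"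
  proof (rule measure_pmf.integral_ge_const[OF fint])
    show "AE x in measure_pmf D. Min S \<le> f x"
      unfolding AE_measure_pmf_iff using finS by (auto simp: S_def)
  qed
  then have "f c0 \<le> (1 - p) * real (card U)" using c0(2) intle by linarith
  then show ?thesis using c0(1) unfolding f_def by blast
qed

lemma iterate_good:
  fixes D :: "('a \<Rightarrow> nat) pmf" and P0 :: "('a \<times> 'a) set"
  assumes finP: "finite P0" and pb: "\<forall>x\<in>P0. measure (measure_pmf D) {c. c (fst x) = c (snd x)} \<ge> p"
    and p1: "p \<le> 1"
  shows "\<exists>cs. length cs = t \<and> set cs \<subseteq> set_pmf D \<and>
     real (card {x\<in>P0. \<forall>c\<in>set cs. c (fst x) \<noteq> c (snd x)}) \<le> (1 - p) ^ t * real (card P0)"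
proof (induction t)
  case 0
  show ?case by (intro exI[of _ "[]"]) simp
next
  case (Suc t)
  then obtain cs where cs: "length cs = t" "set cs \<subseteq> set_pmf D"
    "real (card {x\<in>P0. \<forall>c\<in>set cs. c (fst x) \<noteq> c (snd x)}) \<le> (1 - p) ^ t * real (card P0)" by blast
  define U where "U = {x\<in>P0. \<forall>c\<in>set cs. c (fst x) \<noteq> c (snd x)}"
  have finU: "finite U" unfolding U_def using finP by simp
  have "\<forall>x\<in>U. measure (measure_pmf D) {c. c (fst x) = c (snd x)} \<ge> p" using pb unfolding U_def by auto
  from exists_good[OF finU this] obtain c where c: "c \<in> set_pmf D"
    "real (card {x\<in>U. c (fst x) \<noteq> c (snd x)}) \<le> (1 - p) * real (card U)" by blast
  have eq: "{x\<in>P0. \<forall>c'\<in>set (c # cs). c' (fst x) \<noteq> c' (snd x)} = {x\<in>U. c (fst x) \<noteq> c (snd x)}"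
    unfolding U_def by auto
  have "(1 - p) * real (card U) \<le> (1 - p) * ((1 - p) ^ t * real (card P0))"
    using cs(3) p1 unfolding U_def by (intro mult_left_mono) auto
  then show ?case using c cs eq
    by (intro exI[of _ "c # cs"]) (auto simp: mult.assoc)
qed

lemma degenerate_dg:
  assumes "degenerate k V E"
  shows "\<exists>ws. distinct ws \<and> set ws = V \<and> dg k E ws"
proof -
  from assms obtain vs where vs: "distinct vs" "set vs = V"
    "\<forall>i < length vs. card {j. j < i \<and> E (vs ! i) (vs ! j)} \<le> k"
    unfolding degenerate_def by blast
  have "distinct vs \<Longrightarrow> (\<forall>i < length vs. card {j. j < i \<and> E (vs ! i) (vs ! j)} \<le> k) \<Longrightarrow> dg k E (rev vs)"
  proof (induction vs rule: rev_induct)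
    case Nil then show ?case by simp
  next
    case (snoc x xs)
    have d: "distinct xs" "x \<notin> set xs" using snoc.prems(1) by auto
    have "\<forall>i < length xs. card {j. j < i \<and> E (xs ! i) (xs ! j)} \<le> k"
    proof (intro allI impI)
      fix i assume i: "i < length xs"
      have "{j. j < i \<and> E (xs ! i) (xs ! j)} = {j. j < i \<and> E ((xs @ [x]) ! i) ((xs @ [x]) ! j)}"
        using i by (auto simp: nth_append)
      then show "card {j. j < i \<and> E (xs ! i) (xs ! j)} \<le> k"
        using snoc.prems(2) i by (metis length_append_singleton less_SucI)
    qed
    then have IH: "dg k E (rev xs)" using snoc.IH d by blast
    have "card {j. j < length xs \<and> E ((xs @ [x]) ! length xs) ((xs @ [x]) ! j)} \<le> k"
      using snoc.prems(2) by (metis length_append_singleton lessI)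
    moreover have "{j. j < length xs \<and> E ((xs @ [x]) ! length xs) ((xs @ [x]) ! j)} = {j. j < length xs \<and> E x (xs ! j)}"
      by (auto simp: nth_append)
    moreover have "{u \<in> set xs. E x u} = (\<lambda>j. xs ! j) ` {j. j < length xs \<and> E x (xs ! j)}"
      by (auto simp: in_set_conv_nth)
    moreover have "card ((\<lambda>j. xs ! j) ` {j. j < length xs \<and> E x (xs ! j)}) = card {j. j < length xs \<and> E x (xs ! j)}"
      using d(1) by (intro card_image) (auto simp: inj_on_def nth_eq_iff_index_eq)
    ultimately have "card {u \<in> set xs. E x u} \<le> k" by simp
    then show ?case using IH by simp
  qed
  then show ?thesis using vs by (intro exI[of _ "rev vs"]) auto
qed




theorem theorem3:
  fixes V :: "'a set" and E :: "'a \<Rightarrow> 'a \<Rightarrow> bool" and k n :: nat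
  assumes "simple_graph V E"
    and "k \<ge> 1"
    and "degenerate k V E"
    and "card V = n" and "n \<ge> 1"
  shows "int (pdim V E) \<le> \<lceil>8.317 * real k * log 2 (real n)\<rceil> + 1"
proof -
  have finV: "finite V" and symE: "\<And>u v. E u v \<Longrightarrow> E v u" and irrE: "\<And>v. \<not> E v v"
    using assms(1) unfolding simple_graph_def by auto
  obtain ws where ws: "distinct ws" "set ws = V" "dg k E ws" using degenerate_dg[OF assms(3)] by blast
  define q where "q = qk k"
  have kq: "k < q" unfolding q_def using qk_gt assms(2) by blast
  interpret gsetup E k q using symE irrE kq by unfold_locales auto
  define D where "D = colr q E ws"
  define p where "p = pk k"
  have p01: "0 < p" "p < 1" unfolding p_def using pk_key[OF assms(2)] by auto
  define P0 where "P0 = {x \<in> V \<times> V. fst x \<noteq> snd x \<and> \<not> E (fst x) (snd x)}"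
  have finP: "finite P0" unfolding P0_def using finV by simp
  have pb: "\<forall>x\<in>P0. measure (measure_pmf D) {c. c (fst x) = c (snd x)} \<ge> p"
  proof
    fix x assume "x \<in> P0"
    then have "fst x \<in> set ws" "snd x \<in> set ws" "fst x \<noteq> snd x" "\<not> E (fst x) (snd x)"
      unfolding P0_def using ws by auto
    from colr_prob[OF ws(3) ws(1) this] show "measure (measure_pmf D) {c. c (fst x) = c (snd x)} \<ge> p"
      unfolding D_def p_def pk_def q_def by simp
  qed
  have x0: "0 \<le> 8.317 * real k * log 2 (real n)" using assms(5) by simp
  have ceil0: "\<lceil>8.317 * real k * log 2 (real n)\<rceil> \<ge> 0" using x0 by simp
  define l where "l = nat \<lceil>8.317 * real k * log 2 (real n)\<rceil>"
  have lr: "real l = real_of_int \<lceil>8.317 * real k * log 2 (real n)\<rceil>"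
    unfolding l_def using ceil0 by simp
  have lge: "real l \<ge> 8.317 * real k * log 2 (real n)"
    unfolding lr by (rule le_of_int_ceiling)
  obtain cs where cs: "length cs = l" "set cs \<subseteq> set_pmf D"
    "real (card {x\<in>P0. \<forall>c\<in>set cs. c (fst x) \<noteq> c (snd x)}) \<le> (1 - p) ^ l * real (card P0)"
    using iterate_good[OF finP pb, of l] p01 by auto
  have small: "(1 - p) ^ l * real (card P0) < 1"
  proof (cases "P0 = {}")
    case True then show ?thesis by simp
  next
    case False
    then obtain a b where ab: "a \<in> V" "b \<in> V" "a \<noteq> b" unfolding P0_def by auto
    have "card {a, b} \<le> card V" using ab finV by (intro card_mono) auto
    then have n2: "n \<ge> 2" using ab assms(4) by simp
    have "card P0 \<le> card (V \<times> V)" unfolding P0_def using finV by (intro card_mono) auto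
    then have "card P0 \<le> n * n" using assms(4) by (simp add: card_cartesian_product)
    then have "real (card P0) \<le> real n ^ 2" by (metis of_nat_le_iff of_nat_mult power2_eq_square)
    then have "(1 - p) ^ l * real (card P0) \<le> (1 - p) ^ l * real n ^ 2"
      using p01 by (intro mult_left_mono) auto
    also have "\<dots> < 1" using final_num[OF assms(2) n2 lge] unfolding p_def by (simp add: mult.commute)
    finally show ?thesis .
  qed
  have "card {x\<in>P0. \<forall>c\<in>set cs. c (fst x) \<noteq> c (snd x)} = 0" using cs(3) small by linarith
  then have unc: "{x\<in>P0. \<forall>c\<in>set cs. c (fst x) \<noteq> c (snd x)} = {}" using finP by simp
  have proper: "\<And>c u v. c \<in> set cs \<Longrightarrow> u \<in> V \<Longrightarrow> v \<in> V \<Longrightarrow> E u v \<Longrightarrow> c u \<noteq> c v"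
    using colr_proper[OF ws(3) ws(1)] cs(2) ws(2) unfolding D_def by blast
  obtain idx :: "'a \<Rightarrow> nat" and m where idx: "idx ` V = {i. i < m}" "inj_on idx V"
    using finite_imp_inj_to_nat_seg[OF finV] by blast
  define \<phi> where "\<phi> v = map (\<lambda>c. c v) cs @ [idx v]" for v
  have nth1: "\<phi> v ! i = (cs ! i) v" if "i < l" for v i
    using that cs(1) unfolding \<phi>_def by (simp add: nth_append)
  have nth2: "\<phi> v ! l = idx v" for v
    using cs(1) unfolding \<phi>_def by (simp add: nth_append)
  have enc: "encoding (l + 1) V E \<phi>"
    unfolding encoding_def
  proof (intro conjI ballI)
    fix v assume "v \<in> V" then show "length (\<phi> v) = l + 1" using cs(1) by (simp add: \<phi>_def)
  next
    show "inj_on \<phi> V"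
    proof (rule inj_onI)
      fix u v assume "u \<in> V" "v \<in> V" "\<phi> u = \<phi> v"
      then have "idx u = idx v" unfolding \<phi>_def by simp
      then show "u = v" using idx(2) \<open>u \<in> V\<close> \<open>v \<in> V\<close> by (simp add: inj_on_eq_iff)
    qed
  next
    fix u v assume u: "u \<in> V" and v: "v \<in> V"
    show "E u v \<longleftrightarrow> (\<forall>i<l + 1. \<phi> u ! i \<noteq> \<phi> v ! i)"
    proof
      assume e: "E u v"
      then have uv: "u \<noteq> v" using irrE by auto
      show "\<forall>i<l + 1. \<phi> u ! i \<noteq> \<phi> v ! i"
      proof (intro allI impI)
        fix i assume i: "i < l + 1"
        show "\<phi> u ! i \<noteq> \<phi> v ! i"
        proof (cases "i < l")
          case True
          then have "cs ! i \<in> set cs" using cs(1) by simp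
          then show ?thesis using proper[OF _ u v e] nth1[OF True] by simp
        next
          case False
          then have "i = l" using i by simp
          then show ?thesis using nth2 uv idx(2) u v by (simp add: inj_on_eq_iff)
        qed
      qed
    next
      assume all: "\<forall>i<l + 1. \<phi> u ! i \<noteq> \<phi> v ! i"
      show "E u v"
      proof (rule ccontr)
        assume ne: "\<not> E u v"
        show False
        proof (cases "u = v")
          case True then show False using all by auto
        next
          case False
          then have "(u, v) \<in> P0" unfolding P0_def using u v ne by simp
          then obtain c where c: "c \<in> set cs" "c u = c v" using unc by auto
          then obtain i where i: "i < length cs" "cs ! i = c" by (metis in_set_conv_nth)
          then have "\<phi> u ! i = \<phi> v ! i" using nth1 cs(1) c(2) by simp
          then show False using all i cs(1) by simp
        qed
      qed
    qed
  qed
  have "pdim V E \<le> l + 1" unfolding pdim_def by (rule Least_le) (use enc in blast)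
  then have "int (pdim V E) \<le> int l + 1" by simp
  also have "int l = \<lceil>8.317 * real k * log 2 (real n)\<rceil>" unfolding l_def using ceil0 by simp
  finally show ?thesis .
qed


end
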